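(* Let $1\le k\le d$ be integers and let $(p_m)_{m\in\mathbb Z}$ be the sequence defined below. Then for every integer $m\ge0$, $$p_m=\sum_{\ell=0}^{m}(-1)^\ell(d-k)^{m-\ell}\binom{d-k+\ell-1}{\ell}.$$ In particular, for an integer $\mu\ge0$, the numbers $t_m:=p_{\mu-m}$ ($0\le m\le\mu$) are the unique solution of $t_\mu=1$ and $t_m=\sum_{j=m+1}^{\mu}t_j\,(j-m-1)\binom{d-k+1}{j-m}$ for $0\le m<\mu$.
   Context: Sequence: $p_m=0$ for $m<0$, $p_0=1$, and $p_m=\sum_{\ell=1}^{m}(\ell-1)\binom{d-k+1}{\ell}p_{m-\ell}$ for $m\ge1$. Conventions: $0^0=1$; for integers $r$ and $\ell\ge0$, $\binom{r}{\ell}=r(r-1)\cdots(r-\ell+1)/\ell!$ (so $\binom{r}{0}=1$), and $\binom{r}{\ell}=0$ for $\ell<0$. *)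

theory Defs
  imports Complex_Main
begin

text \<open>Binomial coefficients with integer upper argument r are the generalized
  binomials gchoose (r(r-1)...(r-l+1)/l!), evaluated in the reals
  (the library provides gchoose only for division rings such as real;
  all values involved are integers).\<close>

fun pseq :: "int \<Rightarrow> int \<Rightarrow> nat \<Rightarrow> real" where
  "pseq d k 0 = 1"
| "pseq d k (Suc n) =
     (\<Sum>l\<in>{1..Suc n}. (real l - 1) * (real_of_int (d - k + 1) gchoose l) * pseq d k (Suc n - l))"

definition pval :: "int \<Rightarrow> int \<Rightarrow> int \<Rightarrow> real" where
  "pval d k m = (if m < 0 then 0 else pseq d k (nat m))"

end

theory Submission
  imports Defs "HOL-Computational_Algebra.Formal_Power_Series"
begin

lemma coef_id:
  fixes a :: real
  shows "- real k * ((a+1) gchoose Suc k) = (a gchoose Suc k) - a * (a gchoose k)"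
  using gbinomial_mult_1[of a k] gbinomial_Suc_Suc[of a k]
  by (simp add: algebra_simps)

lemma pseq_closed:
  fixes N :: nat and d k :: int
  assumes N: "real_of_int (d - k) = real N"
  shows "pseq d k m = (\<Sum>l=0..m. (-1) ^ l * real N ^ (m - l)
                         * ((real l + real N - 1) gchoose l))"
proof -
  define a where "a = real N"
  have a1: "real_of_int (d - k + 1) = a + 1" using N a_def by simp
  define P where "P = Abs_fps (pseq d k)"
  define c where "c = (\<lambda>l::nat. if l = 0 then 1 else - (real l - 1) * ((a+1) gchoose l))"
  define C where "C = Abs_fps c"
  define B where "B = fps_binomial a"
  define G where "G = fps_binomial (-a)"
  define Hh where "Hh = Abs_fps (\<lambda>j. a ^ j)"
  define L where "L = (1 :: real fps) - fps_const a * fps_X"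
  have PC: "P * C = 1"
  proof (rule fps_ext)
    fix n
    show "fps_nth (P * C) n = fps_nth 1 n"
    proof (cases n)
      case 0 then show ?thesis by (simp add: P_def C_def c_def fps_mult_nth)
    next
      case (Suc n')
      have "fps_nth (P * C) n = fps_nth (C * P) n" by (simp add: mult.commute)
      also have "\<dots> = (\<Sum>i=0..Suc n'. c i * pseq d k (Suc n' - i))"
        by (simp add: fps_mult_nth C_def P_def Suc)
      also have "\<dots> = c 0 * pseq d k (Suc n') + (\<Sum>i=1..Suc n'. c i * pseq d k (Suc n' - i))"
        by (simp add: sum.atLeast_Suc_atMost)
      also have "(\<Sum>i=1..Suc n'. c i * pseq d k (Suc n' - i))
          = - (\<Sum>i=1..Suc n'. (real i - 1) * (real_of_int (d - k + 1) gchoose i) * pseq d k (Suc n' - i))"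
        unfolding a1 sum_negf[symmetric] by (rule sum.cong) (auto simp: c_def algebra_simps)
      also have "c 0 * pseq d k (Suc n') = pseq d k (Suc n')" by (simp add: c_def)
      finally show ?thesis using Suc by simp
    qed
  qed
  have CBL: "C = B * L"
  proof (rule fps_ext)
    fix n
    show "fps_nth C n = fps_nth (B * L) n"
    proof (cases n)
      case 0 then show ?thesis by (simp add: C_def c_def B_def L_def fps_mult_nth)
    next
      case (Suc k')
      have "fps_nth (B * L) n = fps_nth (B - fps_const a * (fps_X * B)) n"
        by (simp add: L_def algebra_simps)
      also have "\<dots> = (a gchoose Suc k') - a * (a gchoose k')"
        by (simp add: B_def Suc)
      also have "\<dots> = - real k' * ((a+1) gchoose Suc k')" by (rule coef_id[symmetric])
      finally show ?thesis by (simp add: C_def c_def Suc)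
    qed
  qed
  have GB: "G * B = 1"
    by (simp add: G_def B_def fps_binomial_add_mult[symmetric])
  have HL: "Hh * L = 1"
  proof (rule fps_ext)
    fix n
    show "fps_nth (Hh * L) n = fps_nth 1 n"
    proof (cases n)
      case 0 then show ?thesis by (simp add: Hh_def L_def fps_mult_nth)
    next
      case (Suc k')
      have "fps_nth (Hh * L) n = fps_nth (Hh - fps_const a * (fps_X * Hh)) n"
        by (simp add: L_def algebra_simps)
      then show ?thesis by (simp add: Hh_def Suc)
    qed
  qed
  have "C * (G * Hh) = 1"
    using GB HL CBL by (metis mult.assoc mult.commute mult_1_right)
  then have "P = G * Hh"
    using PC by (metis mult.assoc mult_1_left mult_1_right)
  then have "fps_nth P m = fps_nth (G * Hh) m" by simp
  also have "\<dots> = (\<Sum>l=0..m. (-1) ^ l * real N ^ (m - l)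
                         * ((real l + real N - 1) gchoose l))"
    unfolding fps_mult_nth
    by (rule sum.cong) (simp_all add: G_def Hh_def a_def gbinomial_negated_upper[of "- real N"] algebra_simps)
  finally show ?thesis by (simp add: P_def)
qed

lemma reidx:
  fixes g :: "nat \<Rightarrow> real" and c :: "nat \<Rightarrow> real"
  shows "(\<Sum>j=m+1..m+s. g (m + s - j) * (real j - real m - 1) * c (j - m))
       = (\<Sum>l=1..s. (real l - 1) * c l * g (s - l))"
proof -
  have "(\<Sum>j=m+1..m+s. g (m + s - j) * (real j - real m - 1) * c (j - m))
      = (\<Sum>l=1..s. g (m + s - (l + m)) * (real (l + m) - real m - 1) * c (l + m - m))"
    using sum.shift_bounds_cl_nat_ivl[of "\<lambda>j. g (m + s - j) * (real j - real m - 1) * c (j - m)" 1 m s]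
    by (simp only: add.commute)
  also have "\<dots> = (\<Sum>l=1..s. (real l - 1) * c l * g (s - l))"
    by (rule sum.cong) auto
  finally show ?thesis .
qed

lemma pseq_rec:
  assumes "m < \<mu>"
  shows "(\<Sum>j=m+1..\<mu>. pseq d k (\<mu> - j) * (real j - real m - 1)
              * (real_of_int (d - k + 1) gchoose (j - m))) = pseq d k (\<mu> - m)"
proof -
  define s where "s = \<mu> - m - 1"
  have s: "\<mu> = m + Suc s" using assms s_def by simp
  have "(\<Sum>j=m+1..\<mu>. pseq d k (\<mu> - j) * (real j - real m - 1)
              * (real_of_int (d - k + 1) gchoose (j - m)))
     = (\<Sum>l=1..Suc s. (real l - 1) * (real_of_int (d - k + 1) gchoose l) * pseq d k (Suc s - l))"
    unfolding s by (rule reidx)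
  also have "\<dots> = pseq d k (Suc s)" by (simp only: pseq.simps(2))
  also have "Suc s = \<mu> - m" using s by simp
  finally show ?thesis .
qed

theorem lemma3:
  fixes d k :: int
  assumes "1 \<le> k" and "k \<le> d"
  shows "(\<forall>m::nat. pval d k (int m) =
            (\<Sum>l=0..m. (-1) ^ l * real_of_int (d - k) ^ (m - l)
                         * (real_of_int (d - k + int l - 1) gchoose l)))
       \<and> (\<forall>(\<mu>::nat) (t::nat \<Rightarrow> real).
            (t \<mu> = 1 \<and>
             (\<forall>m<\<mu>. t m = (\<Sum>j=m+1..\<mu>. t j * (real j - real m - 1)
                                        * (real_of_int (d - k + 1) gchoose (j - m)))))
            \<longleftrightarrow> (\<forall>m\<le>\<mu>. t m = pval d k (int \<mu> - int m)))"
proof (intro conjI allI)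
  fix m :: nat
  define N where "N = nat (d - k)"
  have N: "real_of_int (d - k) = real N" using assms N_def by simp
  have pv: "pval d k (int m) = pseq d k m" by (simp add: pval_def)
  show "pval d k (int m) =
            (\<Sum>l=0..m. (-1) ^ l * real_of_int (d - k) ^ (m - l)
                         * (real_of_int (d - k + int l - 1) gchoose l))"
  proof -
    have e: "\<And>l. real_of_int (d - k + int l - 1) = real l + real N - 1"
      using N by simp
    show ?thesis unfolding pv pseq_closed[OF N, of m] N e ..
  qed
next
  fix \<mu> :: nat and t :: "nat \<Rightarrow> real"
  have pv: "\<And>m. m \<le> \<mu> \<Longrightarrow> pval d k (int \<mu> - int m) = pseq d k (\<mu> - m)"
  proof -
    fix m :: nat assume "m \<le> \<mu>"
    then have e: "int \<mu> - int m = int (\<mu> - m)" by (rule of_nat_diff[symmetric])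
    show "pval d k (int \<mu> - int m) = pseq d k (\<mu> - m)"
      unfolding pval_def e nat_int by simp
  qed
  show "(t \<mu> = 1 \<and>
             (\<forall>m<\<mu>. t m = (\<Sum>j=m+1..\<mu>. t j * (real j - real m - 1)
                                        * (real_of_int (d - k + 1) gchoose (j - m)))))
            \<longleftrightarrow> (\<forall>m\<le>\<mu>. t m = pval d k (int \<mu> - int m))"
  proof
    assume H: "t \<mu> = 1 \<and>
             (\<forall>m<\<mu>. t m = (\<Sum>j=m+1..\<mu>. t j * (real j - real m - 1)
                                        * (real_of_int (d - k + 1) gchoose (j - m))))"
    have "\<forall>m. m \<le> \<mu> \<longrightarrow> t m = pseq d k (\<mu> - m)"
    proof (intro allI)
      fix m
      show "m \<le> \<mu> \<longrightarrow> t m = pseq d k (\<mu> - m)"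
      proof (induction "\<mu> - m" arbitrary: m rule: less_induct)
        case less
        show ?case
        proof
          assume mle: "m \<le> \<mu>"
          show "t m = pseq d k (\<mu> - m)"
          proof (cases "m = \<mu>")
            case True then show ?thesis using conjunct1[OF H] by simp
          next
            case False
            then have ml: "m < \<mu>" using mle by simp
            have "t m = (\<Sum>j=m+1..\<mu>. t j * (real j - real m - 1)
                                        * (real_of_int (d - k + 1) gchoose (j - m)))"
              using conjunct2[OF H, rule_format, OF ml] .
            also have "\<dots> = (\<Sum>j=m+1..\<mu>. pseq d k (\<mu> - j) * (real j - real m - 1)
                                        * (real_of_int (d - k + 1) gchoose (j - m)))"
            proof (rule sum.cong[OF refl])
              fix j assume j: "j \<in> {m+1..\<mu>}"
              then have "\<mu> - j < \<mu> - m" "j \<le> \<mu>" by auto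
              then have "t j = pseq d k (\<mu> - j)" using less.hyps[of j] by blast
              then show "t j * (real j - real m - 1) * (real_of_int (d - k + 1) gchoose (j - m))
                 = pseq d k (\<mu> - j) * (real j - real m - 1) * (real_of_int (d - k + 1) gchoose (j - m))"
                by simp
            qed
            also have "\<dots> = pseq d k (\<mu> - m)" by (rule pseq_rec[OF ml])
            finally show ?thesis .
          qed
        qed
      qed
    qed
    then show "\<forall>m\<le>\<mu>. t m = pval d k (int \<mu> - int m)" using pv by simp
  next
    assume H: "\<forall>m\<le>\<mu>. t m = pval d k (int \<mu> - int m)"
    then have H': "\<And>m. m \<le> \<mu> \<Longrightarrow> t m = pseq d k (\<mu> - m)" using pv by simp
    show "t \<mu> = 1 \<and>
             (\<forall>m<\<mu>. t m = (\<Sum>j=m+1..\<mu>. t j * (real j - real m - 1)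
                                        * (real_of_int (d - k + 1) gchoose (j - m))))"
    proof (intro conjI allI impI)
      show "t \<mu> = 1" using H' by simp
    next
      fix m assume ml: "m < \<mu>"
      have "(\<Sum>j=m+1..\<mu>. t j * (real j - real m - 1)
                                        * (real_of_int (d - k + 1) gchoose (j - m)))
          = (\<Sum>j=m+1..\<mu>. pseq d k (\<mu> - j) * (real j - real m - 1)
                                        * (real_of_int (d - k + 1) gchoose (j - m)))"
        by (rule sum.cong[OF refl]) (simp add: H')
      also have "\<dots> = pseq d k (\<mu> - m)" by (rule pseq_rec[OF ml])
      finally show "t m = (\<Sum>j=m+1..\<mu>. t j * (real j - real m - 1)
                                        * (real_of_int (d - k + 1) gchoose (j - m)))"
        using H' ml by simp
    qed
  qed
qed

end
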